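(* Let $\Bbbk\supseteq\mathbb Q$ be a commutative ring, $\mathfrak g$ a Lie algebra over $\Bbbk$, $H=\mathcal U(\mathfrak g)$, $C=S(\mathfrak g)$, and $\xi:S(\mathfrak g)\to\mathcal U(\mathfrak g)$ the symmetrization map $x_1\cdots x_n\mapsto\frac1{n!}\sum_{\sigma\in S_n}x_{\sigma(1)}\cdots x_{\sigma(n)}$. For $h\in\mathfrak g$ let $D_h:=\xi^{-1}\circ L_h\circ\xi:S(\mathfrak g)\to S(\mathfrak g)$, where $L_h(u)=hu$ is left multiplication in $\mathcal U(\mathfrak g)$. Then for all $h,x\in\mathfrak g$ and $n\ge0$, $$D_h(x^n)=\xi^{-1}(hx^n)=\sum_{k=0}^n\binom nk B_{n-k}\,x^k\cdot\bigl((\operatorname{ad}x)^{n-k}(h)\bigr),$$ where the product on the right is taken in $S(\mathfrak g)$ and $(\operatorname{ad}x)(y)=[x,y]$.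
   Context: $\xi$ is a coalgebra isomorphism $S(\mathfrak g)\to\mathcal U(\mathfrak g)$ which is the identity on $\mathfrak g$ (here one uses that $\mathfrak g$ is such that the PBW theorem holds, e.g. $\mathfrak g$ projective over $\Bbbk$). Bernoulli numbers are defined by $\frac{z}{e^z-1}=\sum_{m\ge0}\frac{B_m}{m!}z^m$. *)

theory Defs
  imports Main "HOL-Library.Function_Algebras" "HOL-Combinatorics.Permutations" "HOL-Computational_Algebra.Formal_Power_Series"
begin

text \<open>A commutative ring k contains Q iff every positive integer is invertible in k.\<close>
definition contains_rat :: "'k::comm_ring_1 itself \<Rightarrow> bool" where
  "contains_rat _ \<longleftrightarrow> (\<forall>n::nat. n > 0 \<longrightarrow> (\<exists>y::'k. of_nat n * y = 1))"

definition qinv :: "nat \<Rightarrow> 'k::comm_ring_1" where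
  "qinv n = (THE y. of_nat n * y = 1)"

definition ratk :: "rat \<Rightarrow> 'k::comm_ring_1" where
  "ratk q = of_int (fst (quotient_of q)) * qinv (nat (snd (quotient_of q)))"

definition bernoulli_gf :: "rat fps" where
  "bernoulli_gf = fps_X / (fps_exp 1 - 1)"

definition bernoulli_num :: "nat \<Rightarrow> rat" where
  "bernoulli_num m = fact m * fps_nth bernoulli_gf m"

definition lie_algebra :: "('k::comm_ring_1 \<Rightarrow> 'g::ab_group_add \<Rightarrow> 'g) \<Rightarrow> ('g \<Rightarrow> 'g \<Rightarrow> 'g) \<Rightarrow> bool" where
  "lie_algebra scale br \<longleftrightarrow> module scale
     \<and> (\<forall>x y z. br (x + y) z = br x z + br y z)
     \<and> (\<forall>x y z. br x (y + z) = br x y + br x z)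
     \<and> (\<forall>c x y. br (scale c x) y = scale c (br x y))
     \<and> (\<forall>c x y. br x (scale c y) = scale c (br x y))
     \<and> (\<forall>x. br x x = 0)
     \<and> (\<forall>x y z. br x (br y z) + br y (br z x) + br z (br x y) = 0)"

section \<open>Free associative algebra on the set g (finitely supported functions on words)\<close>

type_synonym ('g, 'k) fralg = "'g list \<Rightarrow> 'k"

definition fsupp :: "('g, 'k::zero) fralg \<Rightarrow> bool" where
  "fsupp p \<longleftrightarrow> finite {w. p w \<noteq> 0}"

definition wrd :: "'g list \<Rightarrow> ('g, 'k::{zero,one}) fralg" where
  "wrd w = (\<lambda>v. if v = w then 1 else 0)"

definition fsc :: "'k::times \<Rightarrow> ('g, 'k) fralg \<Rightarrow> ('g, 'k) fralg" where
  "fsc c p = (\<lambda>w. c * p w)"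

definition fmul :: "('g, 'k::comm_ring_1) fralg \<Rightarrow> ('g, 'k) fralg \<Rightarrow> ('g, 'k) fralg" where
  "fmul p q = (\<lambda>w. \<Sum>i\<le>length w. p (take i w) * q (drop i w))"

inductive_set idl :: "('g, 'k::comm_ring_1) fralg set \<Rightarrow> ('g, 'k) fralg set" for R where
  zero: "0 \<in> idl R"
| gen: "r \<in> R \<Longrightarrow> r \<in> idl R"
| add: "a \<in> idl R \<Longrightarrow> b \<in> idl R \<Longrightarrow> a + b \<in> idl R"
| smul: "a \<in> idl R \<Longrightarrow> fsc c a \<in> idl R"
| lmul: "a \<in> idl R \<Longrightarrow> fmul (wrd u) a \<in> idl R"
| rmul: "a \<in> idl R \<Longrightarrow> fmul a (wrd u) \<in> idl R"

text \<open>Relations making the free algebra on g into the tensor algebra T(g).\<close>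
definition rel_lin :: "('k::comm_ring_1 \<Rightarrow> 'g::ab_group_add \<Rightarrow> 'g) \<Rightarrow> ('g, 'k) fralg set" where
  "rel_lin scale = {wrd [x + y] - wrd [x] - wrd [y] | x y. True}
     \<union> {wrd [scale c x] - fsc c (wrd [x]) | c x. True}"

definition rel_U :: "('k::comm_ring_1 \<Rightarrow> 'g::ab_group_add \<Rightarrow> 'g) \<Rightarrow> ('g \<Rightarrow> 'g \<Rightarrow> 'g) \<Rightarrow> ('g, 'k) fralg set" where
  "rel_U scale br = rel_lin scale \<union> {wrd [x, y] - wrd [y, x] - wrd [br x y] | x y. True}"

definition rel_S :: "('k::comm_ring_1 \<Rightarrow> 'g::ab_group_add \<Rightarrow> 'g) \<Rightarrow> ('g, 'k) fralg set" where
  "rel_S scale = rel_lin scale \<union> {wrd [x, y] - wrd [y, x] | x y. True}"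

text \<open>Elements of the quotient algebras are equivalence classes of finitely supported representatives.\<close>
definition qclass :: "('g, 'k::comm_ring_1) fralg set \<Rightarrow> ('g, 'k) fralg \<Rightarrow> ('g, 'k) fralg set" where
  "qclass R p = {q. fsupp q \<and> q - p \<in> idl R}"

definition qcarrier :: "('g, 'k::comm_ring_1) fralg set \<Rightarrow> ('g, 'k) fralg set set" where
  "qcarrier R = qclass R ` {p. fsupp p}"

definition Ucl where "Ucl scale br = qclass (rel_U scale br)"
definition Scl where "Scl scale = qclass (rel_S scale)"
definition Ucarrier where "Ucarrier scale br = qcarrier (rel_U scale br)"
definition Scarrier where "Scarrier scale = qcarrier (rel_S scale)"

definition symw :: "'g list \<Rightarrow> ('g, 'k::comm_ring_1) fralg" where
  "symw w = fsc (qinv (fact (length w)))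
     (\<Sum>\<sigma>\<in>{\<sigma>. \<sigma> permutes {..<length w}}. wrd (map (\<lambda>i. w ! \<sigma> i) [0..<length w]))"

definition symz :: "('g, 'k::comm_ring_1) fralg \<Rightarrow> ('g, 'k) fralg" where
  "symz p = (\<Sum>w\<in>{w. p w \<noteq> 0}. fsc (p w) (symw w))"

definition xi :: "('k::comm_ring_1 \<Rightarrow> 'g::ab_group_add \<Rightarrow> 'g) \<Rightarrow> ('g \<Rightarrow> 'g \<Rightarrow> 'g)
    \<Rightarrow> ('g, 'k) fralg set \<Rightarrow> ('g, 'k) fralg set" where
  "xi scale br C = Ucl scale br (symz (SOME p. p \<in> C))"

definition Lmul :: "('k::comm_ring_1 \<Rightarrow> 'g::ab_group_add \<Rightarrow> 'g) \<Rightarrow> ('g \<Rightarrow> 'g \<Rightarrow> 'g) \<Rightarrow> 'g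
    \<Rightarrow> ('g, 'k) fralg set \<Rightarrow> ('g, 'k) fralg set" where
  "Lmul scale br h C = Ucl scale br (fmul (wrd [h]) (SOME p. p \<in> C))"

definition xi_inv where
  "xi_inv scale br = the_inv_into (Scarrier scale) (xi scale br)"

definition Dop where
  "Dop scale br h = xi_inv scale br \<circ> Lmul scale br h \<circ> xi scale br"

end

theory Submission
  imports Defs
begin


definition Dser :: "rat fps" where "Dser = Abs_fps (\<lambda>j. 1 / fact (Suc j))"

lemma exp_minus_one: "fps_exp (1::rat) - 1 = fps_X * Dser"
  by (rule fps_ext) (auto simp: Dser_def fps_exp_def fact_reduce)

lemma bern_D: "bernoulli_gf * Dser = 1"
proof -
  have ne: "fps_exp (1::rat) - 1 \<noteq> 0"
  proof
    assume "fps_exp (1::rat) - 1 = 0"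
    hence "fps_nth (fps_exp (1::rat) - 1) 1 = 0" by simp
    thus False by (simp add: fps_exp_def)
  qed
  have sd: "subdegree (fps_exp (1::rat) - 1) = 1"
    by (rule subdegreeI) (auto simp: fps_exp_def)
  have "bernoulli_gf * (fps_exp 1 - 1) = fps_X"
    unfolding bernoulli_gf_def using ne sd
    by (intro fps_times_divide_eq) auto
  hence "fps_X * (bernoulli_gf * Dser) = fps_X * 1"
    by (simp add: exp_minus_one algebra_simps)
  thus ?thesis by simp
qed

lemma bern_sum: "(\<Sum>a\<le>m. of_nat (m choose a) * bernoulli_num a / of_nat (m - a + 1)) = (if m = 0 then 1 else 0)"
proof -
  have "fps_nth (bernoulli_gf * Dser) m = (if m = 0 then 1 else 0)" by (simp add: bern_D)
  hence e: "(\<Sum>a=0..m. fps_nth bernoulli_gf a * (1 / fact (Suc (m - a)))) = (if m = 0 then 1 else 0)"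
    by (simp add: fps_mult_nth Dser_def)
  have "(\<Sum>a\<le>m. of_nat (m choose a) * bernoulli_num a / of_nat (m - a + 1))
      = (\<Sum>a\<le>m. fact m * (fps_nth bernoulli_gf a * (1 / fact (Suc (m - a)))))"
  proof (rule sum.cong[OF refl])
    fix a assume "a \<in> {..m}"
    hence am: "a \<le> m" by simp
    have f: "(fact (Suc (m - a)) :: rat) = of_nat (m - a + 1) * fact (m - a)" by simp
    have c: "(of_nat (m choose a) :: rat) = fact m / (fact a * fact (m - a))"
      using am by (simp add: binomial_fact)
    show "of_nat (m choose a) * bernoulli_num a / of_nat (m - a + 1)
      = fact m * (fps_nth bernoulli_gf a * (1 / fact (Suc (m - a))))"
      unfolding f c bernoulli_num_def by (simp add: field_simps)
  qed
  also have "\<dots> = fact m * (\<Sum>a=0..m. fps_nth bernoulli_gf a * (1 / fact (Suc (m - a))))"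
    by (simp add: sum_distrib_left atMost_atLeast0)
  also have "\<dots> = (if m = 0 then 1 else 0)" using e by simp
  finally show ?thesis .
qed


lemma qinv_mult:
  assumes "contains_rat TYPE('k::comm_ring_1)" "n > 0"
  shows "of_nat n * (qinv n :: 'k) = 1"
proof -
  obtain y :: 'k where y: "of_nat n * y = 1" using assms unfolding contains_rat_def by blast
  have "of_nat n * (THE y::'k. of_nat n * y = 1) = 1"
  proof (rule theI[of _ y])
    show "of_nat n * y = 1" by (rule y)
    fix z :: 'k assume "of_nat n * z = 1"
    hence "z = z * (of_nat n * y)" using y by simp
    also have "\<dots> = (of_nat n * z) * y" by (simp add: algebra_simps)
    finally show "z = y" using \<open>of_nat n * z = 1\<close> by simp
  qed
  thus ?thesis unfolding qinv_def .
qed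

lemma cancel_pos:
  assumes "contains_rat TYPE('k::comm_ring_1)" "b > 0" "of_int b * (z::'k) = of_int b * z'"
  shows "z = z'"
proof -
  have e: "of_int b = (of_nat (nat b) :: 'k)" using assms(2) by simp
  have "qinv (nat b) * (of_int b * z) = qinv (nat b) * (of_int b * z')" using assms(3) by simp
  thus ?thesis using qinv_mult[OF assms(1), of "nat b"] assms(2) unfolding e
    by (simp add: algebra_simps)
qed

lemma ratk_char:
  assumes "contains_rat TYPE('k::comm_ring_1)" "b > 0" "q = of_int a / of_int b"
  shows "of_int b * (ratk q :: 'k) = of_int a"
proof -
  obtain p d where pd: "quotient_of q = (p, d)" by (cases "quotient_of q")
  have d: "d > 0" using quotient_of_denom_pos[OF pd] .
  have "q = of_int p / of_int d" using quotient_of_div[OF pd] .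
  hence "of_int a / of_int b = (of_int p / of_int d :: rat)" using assms(3) by simp
  hence "(of_int (a * d) :: rat) = of_int (p * b)" using d assms(2) by (simp add: field_simps)
  hence ad: "a * d = p * b" by (simp only: of_int_eq_iff)
  have r: "ratk q = (of_int p * qinv (nat d) :: 'k)" unfolding ratk_def pd by simp
  have dd: "of_int d * (qinv (nat d) :: 'k) = 1"
    using qinv_mult[OF assms(1), of "nat d"] d by simp
  have "of_int d * (of_int b * (ratk q :: 'k)) = of_int d * of_int a"
  proof -
    have "of_int d * (of_int b * (ratk q :: 'k)) = of_int b * of_int p * (of_int d * qinv (nat d))"
      unfolding r by (simp add: algebra_simps)
    also have "\<dots> = of_int (p * b)" using dd by simp
    also have "\<dots> = of_int d * of_int a" by (metis ad of_int_mult mult.commute)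
    finally show ?thesis .
  qed
  thus ?thesis using cancel_pos[OF assms(1) d] by blast
qed

lemma ratk_unique:
  assumes "contains_rat TYPE('k::comm_ring_1)" "b > 0" "q = of_int a / of_int b"
    "of_int b * (z::'k) = of_int a"
  shows "ratk q = z"
proof -
  have "of_int b * (ratk q :: 'k) = of_int b * z" using ratk_char[OF assms(1-3)] assms(4) by simp
  thus ?thesis by (rule cancel_pos[OF assms(1,2)])
qed

lemma rat_rep: fixes q :: rat obtains a b where "b > 0" "q = of_int a / of_int b"
proof -
  obtain a b where pd: "quotient_of q = (a, b)" by (cases "quotient_of q")
  show ?thesis by (rule that[OF quotient_of_denom_pos[OF pd] quotient_of_div[OF pd]])
qed

lemma ratk_add:
  assumes "contains_rat TYPE('k::comm_ring_1)"
  shows "(ratk (q1 + q2) :: 'k) = ratk q1 + ratk q2"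
proof -
  obtain a1 b1 where 1: "b1 > 0" "q1 = of_int a1 / of_int b1" by (rule rat_rep)
  obtain a2 b2 where 2: "b2 > 0" "q2 = of_int a2 / of_int b2" by (rule rat_rep)
  note c1 = ratk_char[OF assms 1]
  note c2 = ratk_char[OF assms 2]
  show ?thesis
  proof (rule ratk_unique[OF assms, of "b1 * b2" _ "a1 * b2 + a2 * b1"])
    show "0 < b1 * b2" using 1 2 by simp
    show "q1 + q2 = of_int (a1 * b2 + a2 * b1) / of_int (b1 * b2)" using 1 2 by (simp add: field_simps)
    have "of_int (b1 * b2) * (ratk q1 + ratk q2 :: 'k) = of_int b2 * (of_int b1 * ratk q1) + of_int b1 * (of_int b2 * ratk q2)"
      by (simp add: algebra_simps)
    thus "of_int (b1 * b2) * (ratk q1 + ratk q2 :: 'k) = of_int (a1 * b2 + a2 * b1)"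
      unfolding c1 c2 by (simp add: algebra_simps)
  qed
qed

lemma ratk_mult:
  assumes "contains_rat TYPE('k::comm_ring_1)"
  shows "(ratk (q1 * q2) :: 'k) = ratk q1 * ratk q2"
proof -
  obtain a1 b1 where 1: "b1 > 0" "q1 = of_int a1 / of_int b1" by (rule rat_rep)
  obtain a2 b2 where 2: "b2 > 0" "q2 = of_int a2 / of_int b2" by (rule rat_rep)
  note c1 = ratk_char[OF assms 1]
  note c2 = ratk_char[OF assms 2]
  show ?thesis
  proof (rule ratk_unique[OF assms, of "b1 * b2" _ "a1 * a2"])
    show "0 < b1 * b2" using 1 2 by simp
    show "q1 * q2 = of_int (a1 * a2) / of_int (b1 * b2)" using 1 2 by simp
    have "of_int (b1 * b2) * (ratk q1 * ratk q2 :: 'k) = (of_int b1 * ratk q1) * (of_int b2 * ratk q2)"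
      by (simp add: algebra_simps)
    thus "of_int (b1 * b2) * (ratk q1 * ratk q2 :: 'k) = of_int (a1 * a2)"
      unfolding c1 c2 by simp
  qed
qed

lemma ratk_of_int:
  assumes "contains_rat TYPE('k::comm_ring_1)"
  shows "(ratk (of_int a) :: 'k) = of_int a"
  by (rule ratk_unique[OF assms, of 1 _ a]) auto

lemma ratk_of_nat:
  assumes "contains_rat TYPE('k::comm_ring_1)"
  shows "(ratk (of_nat a) :: 'k) = of_nat a"
  using ratk_of_int[OF assms, of "int a"] by simp

lemma ratk_qinv:
  assumes "contains_rat TYPE('k::comm_ring_1)" "n > 0"
  shows "(ratk (1 / of_nat n) :: 'k) = qinv n"
  by (rule ratk_unique[OF assms(1), of "int n" _ 1]) (use assms qinv_mult[OF assms] in auto)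

lemma ratk_sum:
  assumes "contains_rat TYPE('k::comm_ring_1)"
  shows "(ratk (\<Sum>i\<in>A. f i) :: 'k) = (\<Sum>i\<in>A. ratk (f i))"
proof (induction A rule: infinite_finite_induct)
  case (infinite A) thus ?case using ratk_of_int[OF assms, of 0] by simp
next
  case empty thus ?case using ratk_of_int[OF assms, of 0] by simp
next
  case (insert x F) thus ?case by (simp add: ratk_add[OF assms])
qed


lemma sum_fun_apply: "(sum f A) w = sum (\<lambda>i. f i w) A"
  by (induction A rule: infinite_finite_induct) auto

lemma fsc_add_right: "fsc (c::'k::comm_ring_1) (a + b) = fsc c a + fsc c b"
  by (simp add: fsc_def fun_eq_iff algebra_simps)
lemma fsc_diff_right: "fsc (c::'k::comm_ring_1) (a - b) = fsc c a - fsc c b"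
  by (simp add: fsc_def fun_eq_iff algebra_simps)
lemma fsc_add_left: "fsc (c + d) (a::('g,'k::comm_ring_1) fralg) = fsc c a + fsc d a"
  by (simp add: fsc_def fun_eq_iff algebra_simps)
lemma fsc_fsc: "fsc (c::'k::comm_ring_1) (fsc d a) = fsc (c * d) a"
  by (simp add: fsc_def fun_eq_iff algebra_simps)
lemma fsc_one[simp]: "fsc (1::'k::comm_ring_1) a = a"
  by (simp add: fsc_def)
lemma fsc_zero_left[simp]: "fsc (0::'k::comm_ring_1) a = 0"
  by (simp add: fsc_def fun_eq_iff)
lemma fsc_zero_right[simp]: "fsc (c::'k::comm_ring_1) 0 = 0"
  by (simp add: fsc_def fun_eq_iff)
lemma fsc_sum_right: "fsc (c::'k::comm_ring_1) (sum f A) = (\<Sum>i\<in>A. fsc c (f i))"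
  by (simp add: fsc_def fun_eq_iff sum_fun_apply sum_distrib_left)
lemma fsc_sum_left: "fsc (sum g A) (a::('g,'k::comm_ring_1) fralg) = (\<Sum>i\<in>A. fsc (g i) a)"
  by (simp add: fsc_def fun_eq_iff sum_fun_apply sum_distrib_right)
lemma fsc_minus_one: "fsc (-1::'k::comm_ring_1) a = - a"
  by (simp add: fsc_def fun_eq_iff)

lemma fmul_add_right: "fmul p (a + b) = fmul p a + fmul p b"
  by (simp add: fmul_def fun_eq_iff algebra_simps sum.distrib)
lemma fmul_add_left: "fmul (a + b) p = fmul a p + fmul b p"
  by (simp add: fmul_def fun_eq_iff algebra_simps sum.distrib)
lemma fmul_diff_right: "fmul p (a - b) = fmul p a - fmul p b"
  by (simp add: fmul_def fun_eq_iff algebra_simps sum_subtractf)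
lemma fmul_diff_left: "fmul (a - b) p = fmul a p - fmul b p"
  by (simp add: fmul_def fun_eq_iff algebra_simps sum_subtractf)
lemma fmul_fsc_right: "fmul p (fsc c a) = fsc c (fmul p a)"
  by (simp add: fmul_def fsc_def fun_eq_iff algebra_simps sum_distrib_left)
lemma fmul_fsc_left: "fmul (fsc c a) p = fsc c (fmul a p)"
  by (simp add: fmul_def fsc_def fun_eq_iff algebra_simps sum_distrib_left)
lemma fmul_zero_right[simp]: "fmul p 0 = 0"
  by (simp add: fmul_def fun_eq_iff)
lemma fmul_zero_left[simp]: "fmul 0 p = 0"
  by (simp add: fmul_def fun_eq_iff)
lemma fmul_sum_right: "fmul p (sum f A) = (\<Sum>i\<in>A. fmul p (f i))"
  by (induction A rule: infinite_finite_induct) (simp_all only: sum.infinite sum.empty sum.insert fmul_add_right fmul_zero_right not_False_eq_True simp_thms)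
lemma fmul_sum_left: "fmul (sum f A) p = (\<Sum>i\<in>A. fmul (f i) p)"
  by (induction A rule: infinite_finite_induct) (simp_all only: sum.infinite sum.empty sum.insert fmul_add_left fmul_zero_left not_False_eq_True simp_thms)

lemma fmul_wrd_wrd: "fmul (wrd u) (wrd v) = (wrd (u @ v) :: ('g,'k::comm_ring_1) fralg)"
proof (rule ext)
  fix w :: "'g list"
  have "fmul (wrd u) (wrd v) w = (\<Sum>i\<le>length w. (if i = length u \<and> w = u @ v then 1 else 0 :: 'k))"
    unfolding fmul_def wrd_def
  proof (rule sum.cong[OF refl])
    fix i assume "i \<in> {..length w}"
    hence i: "i \<le> length w" by simp
    have "(take i w = u \<and> drop i w = v) = (i = length u \<and> w = u @ v)"
    proof
      assume "take i w = u \<and> drop i w = v"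
      thus "i = length u \<and> w = u @ v" using i by (auto simp: min_def)
    next
      assume "i = length u \<and> w = u @ v"
      thus "take i w = u \<and> drop i w = v" by simp
    qed
    thus "(if take i w = u then 1 else 0) * (if drop i w = v then 1 else 0)
        = (if i = length u \<and> w = u @ v then 1 else (0::'k))" by auto
  qed
  also have "\<dots> = wrd (u @ v) w"
    by (cases "w = u @ v") (auto simp: wrd_def)
  finally show "fmul (wrd u) (wrd v) w = (wrd (u @ v) w :: 'k)" .
qed

lemma fmul_Nil_left[simp]: "fmul (wrd []) a = (a :: ('g,'k::comm_ring_1) fralg)"
proof (rule ext)
  fix w :: "'g list"
  have "fmul (wrd []) a w = (\<Sum>i\<le>length w. if i = 0 then a w else 0)"
    unfolding fmul_def wrd_def by (rule sum.cong) auto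
  thus "fmul (wrd []) a w = a w" by simp
qed

lemma fmul_Nil_right[simp]: "fmul a (wrd []) = (a :: ('g,'k::comm_ring_1) fralg)"
proof (rule ext)
  fix w :: "'g list"
  have "fmul a (wrd []) w = (\<Sum>i\<le>length w. if i = length w then a w else 0)"
    unfolding fmul_def wrd_def by (rule sum.cong) auto
  thus "fmul a (wrd []) w = a w" by simp
qed

lemma fsupp_zero[simp]: "fsupp (0::('g,'k::comm_ring_1) fralg)" by (simp add: fsupp_def)
lemma fsupp_wrd[simp]: "fsupp (wrd w :: ('g,'k::comm_ring_1) fralg)"
proof -
  have "{v. (wrd w :: ('g,'k) fralg) v \<noteq> 0} \<subseteq> {w}" by (auto simp: wrd_def)
  thus ?thesis unfolding fsupp_def using finite_subset by blast
qed
lemma fsupp_add[simp]: "fsupp a \<Longrightarrow> fsupp b \<Longrightarrow> fsupp (a + (b::('g,'k::comm_ring_1) fralg))"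
  unfolding fsupp_def by (rule finite_subset[of _ "{w. a w \<noteq> 0} \<union> {w. b w \<noteq> 0}"]) auto
lemma fsupp_fsc[simp]: "fsupp a \<Longrightarrow> fsupp (fsc c (a::('g,'k::comm_ring_1) fralg))"
  unfolding fsupp_def fsc_def by (rule finite_subset[of _ "{w. a w \<noteq> 0}"]) auto
lemma fsupp_uminus[simp]: "fsupp a \<Longrightarrow> fsupp (- (a::('g,'k::comm_ring_1) fralg))"
  unfolding fsupp_def by simp
lemma fsupp_diff[simp]: "fsupp a \<Longrightarrow> fsupp b \<Longrightarrow> fsupp (a - (b::('g,'k::comm_ring_1) fralg))"
  using fsupp_add[of a "- b"] by simp
lemma fsupp_sum: "(\<And>i. i \<in> A \<Longrightarrow> fsupp (f i)) \<Longrightarrow> fsupp (sum f A :: ('g,'k::comm_ring_1) fralg)"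
  by (induction A rule: infinite_finite_induct) auto

lemma expand:
  assumes "fsupp (a::('g,'k::comm_ring_1) fralg)"
  shows "a = (\<Sum>w\<in>{w. a w \<noteq> 0}. fsc (a w) (wrd w))"
proof (rule ext)
  fix v
  have fin: "finite {w. a w \<noteq> 0}" using assms by (simp add: fsupp_def)
  have "(\<Sum>w\<in>{w. a w \<noteq> 0}. fsc (a w) (wrd w)) v = (\<Sum>w\<in>{w. a w \<noteq> 0}. if w = v then a v else 0)"
    unfolding sum_fun_apply by (rule sum.cong) (auto simp: fsc_def wrd_def)
  also have "\<dots> = a v" using fin by (cases "a v = 0") (auto simp: sum.delta')
  finally show "a v = (\<Sum>w\<in>{w. a w \<noteq> 0}. fsc (a w) (wrd w)) v" by simp
qed

lemma fsupp_fmul: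
  assumes "fsupp (p::('g,'k::comm_ring_1) fralg)" "fsupp q"
  shows "fsupp (fmul p q)"
proof -
  have "fmul p q = fmul (\<Sum>w\<in>{w. p w \<noteq> 0}. fsc (p w) (wrd w)) (\<Sum>w\<in>{w. q w \<noteq> 0}. fsc (q w) (wrd w))"
    using expand[OF assms(1)] expand[OF assms(2)] by simp
  also have "\<dots> = (\<Sum>i\<in>{w. q w \<noteq> 0}. fsc (q i) (\<Sum>ia\<in>{w. p w \<noteq> 0}. fsc (p ia) (wrd (ia @ i))))"
    by (simp only: fmul_sum_left fmul_sum_right fmul_fsc_left fmul_fsc_right fmul_wrd_wrd)
  finally show ?thesis by (simp only:) (intro fsupp_sum fsupp_fsc fsupp_wrd)
qed

lemma idl_uminus: "a \<in> idl R \<Longrightarrow> - a \<in> idl R"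
proof -
  assume "a \<in> idl R"
  hence "fsc (-1) a \<in> idl R" by (rule idl.smul)
  thus ?thesis by (simp only: fsc_minus_one)
qed
lemma idl_diff: "a \<in> idl R \<Longrightarrow> b \<in> idl R \<Longrightarrow> a - b \<in> idl R"
proof -
  assume "a \<in> idl R" "b \<in> idl R"
  hence "a + - b \<in> idl R" by (intro idl.add idl_uminus)
  thus ?thesis by (simp only: diff_conv_add_uminus)
qed
lemma idl_sum: "(\<And>i. i \<in> A \<Longrightarrow> f i \<in> idl R) \<Longrightarrow> sum f A \<in> idl R"
proof (induction A rule: infinite_finite_induct)
  case (insert x F)
  have "f x \<in> idl R" "sum f F \<in> idl R" using insert by auto
  hence "f x + sum f F \<in> idl R" by (rule idl.add)
  thus ?case by (simp only: sum.insert[OF insert(1,2)])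
qed (simp_all add: idl.zero)
lemma idl_sand: "a \<in> idl R \<Longrightarrow> fmul (wrd u) (fmul a (wrd v)) \<in> idl R"
  by (rule idl.lmul, rule idl.rmul)

lemma qclass_eq: "p - q \<in> idl R \<Longrightarrow> qclass R p = qclass R q"
proof -
  assume pq: "p - q \<in> idl R"
  have "r - p \<in> idl R \<longleftrightarrow> r - q \<in> idl R" for r
  proof
    assume "r - p \<in> idl R"
    hence "(r - p) + (p - q) \<in> idl R" by (rule idl.add[OF _ pq])
    moreover have "(r - p) + (p - q) = r - q" by (simp add: fun_eq_iff)
    ultimately show "r - q \<in> idl R" by (simp only:)
  next
    assume "r - q \<in> idl R"
    hence "(r - q) - (p - q) \<in> idl R" by (rule idl_diff[OF _ pq])
    moreover have "(r - q) - (p - q) = r - p" by (simp add: fun_eq_iff)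
    ultimately show "r - p \<in> idl R" by (simp only:)
  qed
  thus ?thesis unfolding qclass_def by blast
qed

lemma qclass_mem: "fsupp p \<Longrightarrow> p \<in> qclass R p"
  unfolding qclass_def by (auto intro: idl.zero)

lemma fsupp_symw[simp]: "fsupp (symw w :: ('g,'k::comm_ring_1) fralg)"
  unfolding symw_def by (intro fsupp_sum fsupp_fsc fsupp_wrd)

lemma symz_eq:
  assumes "finite W" "{w. p w \<noteq> 0} \<subseteq> W"
  shows "symz p = (\<Sum>w\<in>W. fsc (p w) (symw w :: ('g,'k::comm_ring_1) fralg))"
  unfolding symz_def using assms by (intro sum.mono_neutral_left) auto

lemma fsupp_symz[simp]: "fsupp (symz (p :: ('g,'k::comm_ring_1) fralg))"
  unfolding symz_def by (intro fsupp_sum fsupp_fsc fsupp_symw)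

lemma symz_add:
  assumes "fsupp (a::('g,'k::comm_ring_1) fralg)" "fsupp b"
  shows "symz (a + b) = symz a + symz b"
proof -
  let ?W = "{w. a w \<noteq> 0} \<union> {w. b w \<noteq> 0}"
  have f: "finite ?W" using assms by (simp add: fsupp_def)
  have "symz (a + b) = (\<Sum>w\<in>?W. fsc ((a + b) w) (symw w))" by (rule symz_eq[OF f]) auto
  also have "\<dots> = (\<Sum>w\<in>?W. fsc (a w) (symw w)) + (\<Sum>w\<in>?W. fsc (b w) (symw w))"
    by (simp add: fsc_add_left sum.distrib)
  also have "\<dots> = symz a + symz b"
  proof -
    have e1: "symz a = (\<Sum>w\<in>?W. fsc (a w) (symw w))" by (rule symz_eq[OF f]) auto
    have e2: "symz b = (\<Sum>w\<in>?W. fsc (b w) (symw w))" by (rule symz_eq[OF f]) auto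
    show ?thesis by (simp only: e1 e2)
  qed
  finally show ?thesis .
qed

lemma symz_fsc:
  assumes "fsupp (a::('g,'k::comm_ring_1) fralg)"
  shows "symz (fsc c a) = fsc c (symz a)"
proof -
  let ?W = "{w. a w \<noteq> 0}"
  have f: "finite ?W" using assms by (simp add: fsupp_def)
  have "symz (fsc c a) = (\<Sum>w\<in>?W. fsc (fsc c a w) (symw w))" by (rule symz_eq[OF f]) (auto simp: fsc_def)
  also have "\<dots> = fsc c (\<Sum>w\<in>?W. fsc (a w) (symw w))"
    by (simp add: fsc_sum_right fsc_fsc) (simp add: fsc_def)
  also have "\<dots> = fsc c (symz a)"
  proof -
    have e1: "symz a = (\<Sum>w\<in>?W. fsc (a w) (symw w))" by (rule symz_eq[OF f]) auto
    show ?thesis by (simp only: e1)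
  qed
  finally show ?thesis .
qed

lemma symz_diff:
  assumes "fsupp (a::('g,'k::comm_ring_1) fralg)" "fsupp b"
  shows "symz (a - b) = symz a - symz b"
  using symz_add[of "a - b" b] assms by simp

lemma symz_zero[simp]: "symz (0 :: ('g,'k::comm_ring_1) fralg) = 0"
  by (simp add: symz_def)

lemma symz_wrd[simp]: "symz (wrd w :: ('g,'k::comm_ring_1) fralg) = symw w"
  by (subst symz_eq[of "{w}"]) (auto simp: wrd_def)

lemma symz_sum:
  assumes "\<And>i. i \<in> A \<Longrightarrow> fsupp (f i :: ('g,'k::comm_ring_1) fralg)"
  shows "symz (sum f A) = (\<Sum>i\<in>A. symz (f i))"
  using assms
proof (induction A rule: infinite_finite_induct)
  case (insert x F)
  have "symz (sum f (insert x F)) = symz (f x + sum f F)" by (simp only: sum.insert[OF insert(1,2)])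
  also have "\<dots> = symz (f x) + symz (sum f F)" using insert(4) by (intro symz_add fsupp_sum) auto
  also have "\<dots> = (\<Sum>i\<in>insert x F. symz (f i))" 
  proof -
    have "symz (sum f F) = (\<Sum>i\<in>F. symz (f i))" using insert.prems by (intro insert.IH) auto
    thus ?thesis by (simp only: sum.insert[OF insert(1,2)])
  qed
  finally show ?case .
qed auto


definition pw :: "'g list \<Rightarrow> (nat \<Rightarrow> nat) \<Rightarrow> 'g list" where
  "pw w \<sigma> = map (\<lambda>i. w ! \<sigma> i) [0..<length w]"

lemma symw_pw: "symw w = fsc (qinv (fact (length w))) (\<Sum>\<sigma>\<in>{\<sigma>. \<sigma> permutes {..<length w}}. wrd (pw w \<sigma>))"
  unfolding symw_def pw_def ..

lemma length_pw[simp]: "length (pw w \<sigma>) = length w" by (simp add: pw_def)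
lemma nth_pw[simp]: "i < length w \<Longrightarrow> pw w \<sigma> ! i = w ! \<sigma> i" by (simp add: pw_def)

lemma symw_swap:
  "symw (u @ [a, b] @ v) = (symw (u @ [b, a] @ v) :: ('g,'k::comm_ring_1) fralg)"
proof -
  define w where "w = u @ [a, b] @ v"
  define w' where "w' = u @ [b, a] @ v"
  define n where "n = length w"
  define p where "p = length u"
  define \<tau> where "\<tau> = Transposition.transpose p (Suc p)"
  have ln: "length w' = n" unfolding w_def w'_def n_def by simp
  have \<tau>: "\<tau> permutes {..<n}" unfolding \<tau>_def n_def w_def p_def
    by (rule permutes_swap_id) auto
  have nth: "w' ! j = w ! \<tau> j" if "j < n" for j
  proof -
    consider "j < p" | "j = p" | "j = Suc p" | "j > Suc p" by linarith
    thus ?thesis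
    proof cases
      case 1 thus ?thesis unfolding w_def w'_def \<tau>_def p_def by (simp add: nth_append)
    next
      case 2 thus ?thesis unfolding w_def w'_def \<tau>_def p_def by (simp add: nth_append)
    next
      case 3 thus ?thesis unfolding w_def w'_def \<tau>_def p_def by (simp add: nth_append)
    next
      case 4
      hence "\<tau> j = j" unfolding \<tau>_def by simp
      thus ?thesis using 4 unfolding w_def w'_def p_def by (simp add: nth_append)
    qed
  qed
  have pweq: "pw w' \<sigma> = pw w (\<tau> \<circ> \<sigma>)" if "\<sigma> permutes {..<n}" for \<sigma>
  proof (rule nth_equalityI)
    show "length (pw w' \<sigma>) = length (pw w (\<tau> \<circ> \<sigma>))" using ln n_def by simp
    fix i assume "i < length (pw w' \<sigma>)"
    hence i: "i < n" using ln by simp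
    have "\<sigma> i < n" using permutes_in_image[OF that] i by simp
    thus "pw w' \<sigma> ! i = pw w (\<tau> \<circ> \<sigma>) ! i" using i ln n_def nth by simp
  qed
  have "(\<Sum>\<sigma>\<in>{\<sigma>. \<sigma> permutes {..<n}}. wrd (pw w' \<sigma>) :: ('g,'k) fralg)
      = (\<Sum>\<sigma>\<in>{\<sigma>. \<sigma> permutes {..<n}}. wrd (pw w (\<tau> \<circ> \<sigma>)))"
    using pweq by (intro sum.cong) auto
  also have "\<dots> = (\<Sum>\<sigma>\<in>{\<sigma>. \<sigma> permutes {..<n}}. wrd (pw w \<sigma>))"
    by (rule setum_permutations_compose_left[OF \<tau>, symmetric])
  finally show ?thesis unfolding symw_pw using ln n_def w_def w'_def by simp
qed

lemma wrd_split:
  "q < length L \<Longrightarrow> (wrd L :: ('g,'k::comm_ring_1) fralg) = fmul (wrd (take q L)) (fmul (wrd [L ! q]) (wrd (drop (Suc q) L)))"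
  by (simp add: fmul_wrd_wrd id_take_nth_drop[symmetric])

lemma pw_split:
  assumes \<sigma>: "\<sigma> permutes {..<length w1}" and len: "length w2 = length w1" and p: "p < length w1"
    and agree: "\<And>j. j < length w1 \<Longrightarrow> j \<noteq> p \<Longrightarrow> w2 ! j = w1 ! j"
  shows "(wrd (pw w2 \<sigma>) :: ('g,'k::comm_ring_1) fralg) =
     fmul (wrd (take (inv \<sigma> p) (pw w1 \<sigma>))) (fmul (wrd [w2 ! p]) (wrd (drop (Suc (inv \<sigma> p)) (pw w1 \<sigma>))))"
proof -
  define q where "q = inv \<sigma> p"
  have sq: "\<sigma> q = p" unfolding q_def using permutes_inverses[OF \<sigma>] by simp
  have q: "q < length w1" using permutes_in_image[OF \<sigma>, of q] sq p by simp
  have nq: "\<sigma> j \<noteq> p" if "j \<noteq> q" for j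
    using permutes_inj[OF \<sigma>] sq that by (metis injD)
  have tk: "take q (pw w2 \<sigma>) = take q (pw w1 \<sigma>)"
  proof (rule nth_equalityI)
    show "length (take q (pw w2 \<sigma>)) = length (take q (pw w1 \<sigma>))" using len by simp
    fix i assume "i < length (take q (pw w2 \<sigma>))"
    hence i: "i < q" "i < length w1" using len q by auto
    have "\<sigma> i < length w1" using permutes_in_image[OF \<sigma>] i by simp
    thus "take q (pw w2 \<sigma>) ! i = take q (pw w1 \<sigma>) ! i"
      using i len agree[of "\<sigma> i"] nq[of i] by simp
  qed
  have dr: "drop (Suc q) (pw w2 \<sigma>) = drop (Suc q) (pw w1 \<sigma>)"
  proof (rule nth_equalityI)
    show "length (drop (Suc q) (pw w2 \<sigma>)) = length (drop (Suc q) (pw w1 \<sigma>))" using len by simp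
    fix i assume "i < length (drop (Suc q) (pw w2 \<sigma>))"
    hence i: "Suc q + i < length w1" using len by auto
    have "\<sigma> (Suc q + i) < length w1" using permutes_in_image[OF \<sigma>] i by simp
    thus "drop (Suc q) (pw w2 \<sigma>) ! i = drop (Suc q) (pw w1 \<sigma>) ! i"
      using i len agree[of "\<sigma> (Suc q + i)"] nq[of "Suc q + i"] by simp
  qed
  have "(pw w2 \<sigma>) ! q = w2 ! p" using q len sq by simp
  hence "(wrd (pw w2 \<sigma>) :: ('g,'k) fralg) = fmul (wrd (take q (pw w2 \<sigma>))) (fmul (wrd [w2 ! p]) (wrd (drop (Suc q) (pw w2 \<sigma>))))"
    using wrd_split[of q "pw w2 \<sigma>"] q len by simp
  hence "(wrd (pw w2 \<sigma>) :: ('g,'k) fralg) = fmul (wrd (take q (pw w1 \<sigma>))) (fmul (wrd [w2 ! p]) (wrd (drop (Suc q) (pw w1 \<sigma>))))"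
    by (simp only: tk dr)
  thus ?thesis by (simp only: q_def)
qed

definition sand :: "'g list \<Rightarrow> ('g,'k::comm_ring_1) fralg \<Rightarrow> 'g list \<Rightarrow> ('g,'k) fralg" where
  "sand u a v = fmul (wrd u) (fmul a (wrd v))"

lemma sand_idl: "a \<in> idl R \<Longrightarrow> sand u a v \<in> idl R"
  unfolding sand_def by (rule idl_sand)

lemma sand_diff: "sand u (a - b) v = sand u a v - sand u b v"
  unfolding sand_def by (simp only: fmul_diff_left fmul_diff_right)
lemma sand_fsc: "sand u (fsc c a) v = fsc c (sand u a v)"
  unfolding sand_def by (simp only: fmul_fsc_left fmul_fsc_right)

lemma symw_lin3:
  assumes len2: "length w2 = length w1" and len3: "length w3 = length w1" and p: "p < length w1"
    and a2: "\<And>j. j < length w1 \<Longrightarrow> j \<noteq> p \<Longrightarrow> w2 ! j = w1 ! j"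
    and a3: "\<And>j. j < length w1 \<Longrightarrow> j \<noteq> p \<Longrightarrow> w3 ! j = w1 ! j"
    and r: "wrd [w1 ! p] - wrd [w2 ! p] - wrd [w3 ! p] \<in> idl R"
  shows "symw w1 - symw w2 - (symw w3 :: ('g,'k::comm_ring_1) fralg) \<in> idl R"
proof -
  let ?P = "{\<sigma>. \<sigma> permutes {..<length w1}}"
  let ?A = "\<lambda>\<sigma>. take (inv \<sigma> p) (pw w1 \<sigma>)"
  let ?B = "\<lambda>\<sigma>. drop (Suc (inv \<sigma> p)) (pw w1 \<sigma>)"
  have e: "(wrd (pw w \<sigma>) :: ('g,'k) fralg) = sand (?A \<sigma>) (wrd [w ! p]) (?B \<sigma>)"
    if "\<sigma> \<in> ?P" "length w = length w1" "\<And>j. j < length w1 \<Longrightarrow> j \<noteq> p \<Longrightarrow> w ! j = w1 ! j"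
    for w :: "'g list" and \<sigma>
    unfolding sand_def using pw_split[of \<sigma> w1 w p] that p by simp
  have "symw w1 - symw w2 - (symw w3 :: ('g,'k) fralg) =
    fsc (qinv (fact (length w1))) (\<Sum>\<sigma>\<in>?P. wrd (pw w1 \<sigma>) - wrd (pw w2 \<sigma>) - wrd (pw w3 \<sigma>))"
    unfolding symw_pw len2 len3 by (simp only: fsc_diff_right sum_subtractf)
  also have "\<dots> = fsc (qinv (fact (length w1))) (\<Sum>\<sigma>\<in>?P. sand (?A \<sigma>) (wrd [w1 ! p] - wrd [w2 ! p] - wrd [w3 ! p]) (?B \<sigma>))"
  proof -
    have "(wrd (pw w1 \<sigma>) :: ('g,'k) fralg) - wrd (pw w2 \<sigma>) - wrd (pw w3 \<sigma>) = sand (?A \<sigma>) (wrd [w1 ! p] - wrd [w2 ! p] - wrd [w3 ! p]) (?B \<sigma>)"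
      if "\<sigma> \<in> ?P" for \<sigma>
      using e[OF that, of w1] e[OF that, of w2] e[OF that, of w3] len2 len3 a2 a3
      by (simp only: sand_diff) simp
    thus ?thesis by (intro arg_cong[where f="fsc _"] sum.cong) auto
  qed
  finally show ?thesis using r by (simp only:) (intro idl.smul idl_sum sand_idl)
qed

lemma symw_lin2:
  assumes len2: "length w2 = length w1" and p: "p < length w1"
    and a2: "\<And>j. j < length w1 \<Longrightarrow> j \<noteq> p \<Longrightarrow> w2 ! j = w1 ! j"
    and r: "wrd [w1 ! p] - fsc c (wrd [w2 ! p]) \<in> idl R"
  shows "symw w1 - fsc c (symw w2 :: ('g,'k::comm_ring_1) fralg) \<in> idl R"
proof -
  let ?P = "{\<sigma>. \<sigma> permutes {..<length w1}}"
  let ?A = "\<lambda>\<sigma>. take (inv \<sigma> p) (pw w1 \<sigma>)"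
  let ?B = "\<lambda>\<sigma>. drop (Suc (inv \<sigma> p)) (pw w1 \<sigma>)"
  have e: "(wrd (pw w \<sigma>) :: ('g,'k) fralg) = sand (?A \<sigma>) (wrd [w ! p]) (?B \<sigma>)"
    if "\<sigma> \<in> ?P" "length w = length w1" "\<And>j. j < length w1 \<Longrightarrow> j \<noteq> p \<Longrightarrow> w ! j = w1 ! j"
    for w :: "'g list" and \<sigma>
    unfolding sand_def using pw_split[of \<sigma> w1 w p] that p by simp
  have "symw w1 - fsc c (symw w2 :: ('g,'k) fralg) =
    fsc (qinv (fact (length w1))) (\<Sum>\<sigma>\<in>?P. wrd (pw w1 \<sigma>) - fsc c (wrd (pw w2 \<sigma>)))"
    unfolding symw_pw len2 by (simp only: fsc_diff_right sum_subtractf fsc_fsc fsc_sum_right mult.commute)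
  also have "\<dots> = fsc (qinv (fact (length w1))) (\<Sum>\<sigma>\<in>?P. sand (?A \<sigma>) (wrd [w1 ! p] - fsc c (wrd [w2 ! p])) (?B \<sigma>))"
  proof -
    have "(wrd (pw w1 \<sigma>) :: ('g,'k) fralg) - fsc c (wrd (pw w2 \<sigma>)) = sand (?A \<sigma>) (wrd [w1 ! p] - fsc c (wrd [w2 ! p])) (?B \<sigma>)"
      if "\<sigma> \<in> ?P" for \<sigma>
      using e[OF that, of w1] e[OF that, of w2] len2 a2
      by (simp only: sand_diff sand_fsc) simp
    thus ?thesis by (intro arg_cong[where f="fsc _"] sum.cong) auto
  qed
  finally show ?thesis using r by (simp only:) (intro idl.smul idl_sum sand_idl)
qed


lemma sand_wrd: "sand u (wrd m) v = (wrd (u @ m @ v) :: ('g,'k::comm_ring_1) fralg)"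
  unfolding sand_def by (simp add: fmul_wrd_wrd)
lemma sand_add: "sand u (a + b) v = sand u a v + sand u b v"
  unfolding sand_def by (simp only: fmul_add_left fmul_add_right)
lemma sand_sum: "sand u (sum f A) v = (\<Sum>i\<in>A. sand u (f i) v)"
  unfolding sand_def by (simp only: fmul_sum_left fmul_sum_right)
lemma sand_zero: "sand u (0::('g,'k::comm_ring_1) fralg) v = 0"
  unfolding sand_def by simp
lemma sand_Nil: "sand [] a [] = (a::('g,'k::comm_ring_1) fralg)"
  unfolding sand_def by simp
lemma fsupp_sand: "fsupp a \<Longrightarrow> fsupp (sand u (a::('g,'k::comm_ring_1) fralg) v)"
  unfolding sand_def by (intro fsupp_fmul fsupp_wrd)

lemma sand_expand:
  assumes "fsupp (a::('g,'k::comm_ring_1) fralg)"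
  shows "sand u a v = (\<Sum>w\<in>{w. a w \<noteq> 0}. fsc (a w) (wrd (u @ w @ v)))"
proof -
  have "sand u a v = sand u (\<Sum>w\<in>{w. a w \<noteq> 0}. fsc (a w) (wrd w)) v"
    using expand[OF assms] by simp
  also have "\<dots> = (\<Sum>w\<in>{w. a w \<noteq> 0}. fsc (a w) (wrd (u @ w @ v)))"
    by (simp only: sand_sum sand_fsc sand_wrd)
  finally show ?thesis .
qed

lemma sand_lmul:
  assumes "fsupp (a::('g,'k::comm_ring_1) fralg)"
  shows "sand u (fmul (wrd u') a) v = sand (u @ u') a v"
proof -
  have "fmul (wrd u') a = sand u' a []" unfolding sand_def by simp
  hence "sand u (fmul (wrd u') a) v = sand u (\<Sum>w\<in>{w. a w \<noteq> 0}. fsc (a w) (wrd (u' @ w @ []))) v"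
    using sand_expand[OF assms, of u' "[]"] by simp
  also have "\<dots> = (\<Sum>w\<in>{w. a w \<noteq> 0}. fsc (a w) (wrd (u @ (u' @ w @ []) @ v)))"
    by (simp only: sand_sum sand_fsc sand_wrd)
  also have "\<dots> = sand (u @ u') a v" using sand_expand[OF assms, of "u @ u'" v] by simp
  finally show ?thesis .
qed

lemma sand_rmul:
  assumes "fsupp (a::('g,'k::comm_ring_1) fralg)"
  shows "sand u (fmul a (wrd v')) v = sand u a (v' @ v)"
proof -
  have "fmul a (wrd v') = sand [] a v'" unfolding sand_def by simp
  hence "sand u (fmul a (wrd v')) v = sand u (\<Sum>w\<in>{w. a w \<noteq> 0}. fsc (a w) (wrd ([] @ w @ v'))) v"
    using sand_expand[OF assms, of "[]" v'] by simp
  also have "\<dots> = (\<Sum>w\<in>{w. a w \<noteq> 0}. fsc (a w) (wrd (u @ ([] @ w @ v') @ v)))"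
    by (simp only: sand_sum sand_fsc sand_wrd)
  also have "\<dots> = sand u a (v' @ v)" using sand_expand[OF assms, of u "v' @ v"] by simp
  finally show ?thesis .
qed

lemma nth_mid: "j \<noteq> length u \<Longrightarrow> (u @ [a] @ v) ! j = (u @ [b] @ v) ! j"
  by (cases "j < length u") (auto simp: nth_append)

lemma relU_idl: "r \<in> rel_lin scale \<Longrightarrow> r \<in> idl (rel_U scale br)"
  by (rule idl.gen) (simp add: rel_U_def)

lemma symz_gen:
  assumes "r \<in> rel_S (scale :: 'k::comm_ring_1 \<Rightarrow> 'g::ab_group_add \<Rightarrow> 'g)"
  shows "symz (sand u r v) \<in> idl (rel_U scale br)"
proof -
  have m: "\<And>j. j < length (u @ [z] @ v) \<Longrightarrow> j \<noteq> length u \<Longrightarrow> (u @ [z'] @ v) ! j = (u @ [z] @ v) ! j"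
    for z z' :: 'g using nth_mid by metis
  from assms consider
      (a) x y where "r = wrd [x + y] - wrd [x] - wrd [y]"
    | (b) c x where "r = wrd [scale c x] - fsc c (wrd [x])"
    | (c) x y where "r = wrd [x, y] - wrd [y, x]"
    unfolding rel_S_def rel_lin_def by blast
  thus ?thesis
  proof cases
    case (a x y)
    have "symz (sand u r v) = symw (u @ [x + y] @ v) - symw (u @ [x] @ v) - symw (u @ [y] @ v)"
      unfolding a by (simp add: sand_diff sand_wrd symz_diff)
    also have "\<dots> \<in> idl (rel_U scale br)"
    proof (rule symw_lin3[where p = "length u"])
      show "wrd [(u @ [x + y] @ v) ! length u] - wrd [(u @ [x] @ v) ! length u] - wrd [(u @ [y] @ v) ! length u]
        \<in> idl (rel_U scale br)" by (rule relU_idl) (auto simp: rel_lin_def)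
    qed (auto simp: nth_append nth_Cons')
    finally show ?thesis .
  next
    case (b c x)
    have "symz (sand u r v) = symw (u @ [scale c x] @ v) - fsc c (symw (u @ [x] @ v))"
      unfolding b by (simp add: sand_diff sand_fsc sand_wrd symz_diff symz_fsc)
    also have "\<dots> \<in> idl (rel_U scale br)"
    proof (rule symw_lin2[where p = "length u"])
      show "wrd [(u @ [scale c x] @ v) ! length u] - fsc c (wrd [(u @ [x] @ v) ! length u])
        \<in> idl (rel_U scale br)" by (rule relU_idl) (auto simp: rel_lin_def)
    qed (auto simp: nth_append nth_Cons')
    finally show ?thesis .
  next
    case (c x y)
    have "symz (sand u r v) = symw (u @ [x, y] @ v) - symw (u @ [y, x] @ v)"
      unfolding c by (simp add: sand_diff sand_wrd symz_diff)
    also have "\<dots> = 0" by (simp only: symw_swap diff_self)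
    finally show ?thesis by (simp add: idl.zero)
  qed
qed

lemma symz_idlS_aux:
  assumes "a \<in> idl (rel_S (scale :: 'k::comm_ring_1 \<Rightarrow> 'g::ab_group_add \<Rightarrow> 'g))"
  shows "fsupp a \<and> (\<forall>u v. symz (sand u a v) \<in> idl (rel_U scale br))"
  using assms
proof (induction a rule: idl.induct)
  case zero
  have "(\<lambda>a. 0) = (0::('g,'k) fralg)" by (simp add: zero_fun_def)
  moreover have "fsupp (0::('g,'k) fralg) \<and> (\<forall>u v. symz (sand u (0::('g,'k) fralg) v) \<in> idl (rel_U scale br))"
    by (simp add: sand_zero idl.zero)
  ultimately show ?case by simp
next
  case (gen r)
  have "fsupp r" using gen unfolding rel_S_def rel_lin_def by auto
  thus ?case using symz_gen[OF gen] by blast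
next
  case (add a b)
  have fa: "fsupp a" and fb: "fsupp b" using add by auto
  have "symz (sand u (a + b) v) \<in> idl (rel_U scale br)" for u v
  proof -
    have "symz (sand u (a + b) v) = symz (sand u a v) + symz (sand u b v)"
      by (simp only: sand_add symz_add fsupp_sand fa fb)
    thus ?thesis using add by (simp add: idl.add)
  qed
  moreover have "fsupp (a + b)" by (rule fsupp_add[OF fa fb])
  ultimately show ?case by blast
next
  case (smul a c)
  have fa: "fsupp a" using smul by auto
  have "symz (sand u (fsc c a) v) \<in> idl (rel_U scale br)" for u v
  proof -
    have "symz (sand u (fsc c a) v) = fsc c (symz (sand u a v))"
      by (simp only: sand_fsc symz_fsc fsupp_sand fa)
    thus ?thesis using smul by (simp add: idl.smul)
  qed
  moreover have "fsupp (fsc c a)" by (rule fsupp_fsc[OF fa])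
  ultimately show ?case by blast
next
  case (lmul a u')
  have fa: "fsupp a" using lmul by auto
  have "fsupp (fmul (wrd u') a)" by (intro fsupp_fmul fsupp_wrd fa)
  moreover have "symz (sand u (fmul (wrd u') a) v) \<in> idl (rel_U scale br)" for u v
    using lmul by (simp add: sand_lmul[OF fa])
  ultimately show ?case by blast
next
  case (rmul a v')
  have fa: "fsupp a" using rmul by auto
  have "fsupp (fmul a (wrd v'))" by (intro fsupp_fmul fsupp_wrd fa)
  moreover have "symz (sand u (fmul a (wrd v')) v) \<in> idl (rel_U scale br)" for u v
    using rmul by (simp add: sand_rmul[OF fa])
  ultimately show ?case by blast
qed

lemma symz_idlS:
  assumes "a \<in> idl (rel_S (scale :: 'k::comm_ring_1 \<Rightarrow> 'g::ab_group_add \<Rightarrow> 'g))"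
  shows "symz a \<in> idl (rel_U scale br)"
  using symz_idlS_aux[OF assms, of br] sand_Nil[of a] by metis


lemma sum_const_fsc: "(\<Sum>i\<in>A. (a::('g,'k::comm_ring_1) fralg)) = fsc (of_nat (card A)) a"
  by (simp add: fun_eq_iff sum_fun_apply fsc_def)

lemma card_fix:
  assumes "i \<le> k"
  shows "card {\<sigma>. \<sigma> permutes {..<Suc k} \<and> \<sigma> i = k} = fact k"
proof -
  let ?P = "\<lambda>j. {\<sigma>. \<sigma> permutes {..<Suc k} \<and> \<sigma> j = k}"
  define \<tau> where "\<tau> = Transposition.transpose i k"
  have \<tau>: "\<tau> permutes {..<Suc k}" unfolding \<tau>_def using assms by (intro permutes_swap_id) auto
  have bij: "bij_betw (\<lambda>\<sigma>. \<sigma> \<circ> \<tau>) (?P i) (?P k)"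
  proof (rule bij_betwI[where g = "\<lambda>\<sigma>. \<sigma> \<circ> \<tau>"])
    show "(\<lambda>\<sigma>. \<sigma> \<circ> \<tau>) \<in> ?P i \<rightarrow> ?P k"
      using \<tau> by (auto intro: permutes_compose simp: \<tau>_def)
    show "(\<lambda>\<sigma>. \<sigma> \<circ> \<tau>) \<in> ?P k \<rightarrow> ?P i"
      using \<tau> by (auto intro: permutes_compose simp: \<tau>_def)
    have tt: "\<tau> \<circ> \<tau> = id" unfolding \<tau>_def by (simp add: fun_eq_iff transpose_def)
    show "\<sigma> \<circ> \<tau> \<circ> \<tau> = \<sigma>" for \<sigma> :: "nat \<Rightarrow> nat" using tt by (simp add: comp_assoc)
    show "\<sigma> \<circ> \<tau> \<circ> \<tau> = \<sigma>" for \<sigma> :: "nat \<Rightarrow> nat" using tt by (simp add: comp_assoc)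
  qed
  have eq: "?P k = {\<sigma>. \<sigma> permutes {..<k}}"
  proof (intro set_eqI iffI)
    fix \<sigma> assume "\<sigma> \<in> ?P k"
    hence s: "\<sigma> permutes {..<Suc k}" "\<sigma> k = k" by auto
    have "\<forall>x. x \<notin> {..<k} \<longrightarrow> \<sigma> x = x"
    proof (intro allI impI)
      fix x :: nat assume "x \<notin> {..<k}"
      hence "x = k \<or> x \<notin> {..<Suc k}" by auto
      thus "\<sigma> x = x" using s permutes_not_in by metis
    qed
    moreover have "\<forall>y. \<exists>!x. \<sigma> x = y" using s(1) unfolding permutes_def by blast
    ultimately show "\<sigma> \<in> {\<sigma>. \<sigma> permutes {..<k}}" unfolding permutes_def by blast
  next
    fix \<sigma> assume "\<sigma> \<in> {\<sigma>. \<sigma> permutes {..<k}}"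
    hence s: "\<sigma> permutes {..<k}" by simp
    have "\<sigma> permutes {..<Suc k}" by (rule permutes_subset[OF s]) auto
    moreover have "\<sigma> k = k" using permutes_not_in[OF s] by simp
    ultimately show "\<sigma> \<in> ?P k" by simp
  qed
  have "card (?P i) = card (?P k)" by (rule bij_betw_same_card[OF bij])
  also have "\<dots> = fact k" unfolding eq by (rule card_permutations) auto
  finally show ?thesis .
qed

lemma qinv_fact_mult:
  assumes "contains_rat TYPE('k::comm_ring_1)"
  shows "(qinv (fact (Suc k)) :: 'k) * of_nat (fact k) = qinv (Suc k)"
proof -
  have "(qinv (fact (Suc k)) :: 'k) * of_nat (fact k) = ratk (1 / of_nat (fact (Suc k)) * of_nat (fact k))"
    by (simp only: ratk_mult[OF assms] ratk_qinv[OF assms] ratk_of_nat[OF assms] fact_gt_zero)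
  also have "(1 / of_nat (fact (Suc k)) * of_nat (fact k) :: rat) = 1 / of_nat (Suc k)"
  proof -
    have nz: "(fact k :: rat) \<noteq> 0" by simp
    have "(of_nat (fact (Suc k)) :: rat) = of_nat (Suc k) * fact k" by (simp only: of_nat_fact) (rule fact_Suc)
    thus ?thesis using nz by (simp only: of_nat_fact) (simp)
  qed
  also have "(ratk (1 / of_nat (Suc k)) :: 'k) = qinv (Suc k)" by (rule ratk_qinv[OF assms]) simp
  finally show ?thesis .
qed

lemma qinv_fact_mult1:
  assumes "contains_rat TYPE('k::comm_ring_1)"
  shows "(qinv (fact n) :: 'k) * of_nat (fact n) = 1"
  using qinv_mult[OF assms, of "fact n"] by (simp add: mult.commute)

lemma symw_rep:
  assumes "contains_rat TYPE('k::comm_ring_1)"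
  shows "symw (replicate n x) = (wrd (replicate n x) :: ('g,'k) fralg)"
proof -
  let ?P = "{\<sigma>. \<sigma> permutes {..<n}}"
  have "pw (replicate n x) \<sigma> = replicate n x" if "\<sigma> \<in> ?P" for \<sigma>
  proof (rule nth_equalityI)
    fix i assume "i < length (pw (replicate n x) \<sigma>)"
    hence "i < n" by simp
    moreover have "\<sigma> i < n" using permutes_in_image[of \<sigma> "{..<n}" i] that \<open>i < n\<close> by simp
    ultimately show "pw (replicate n x) \<sigma> ! i = replicate n x ! i" by simp
  qed simp
  hence "(\<Sum>\<sigma>\<in>?P. wrd (pw (replicate n x) \<sigma>)) = (\<Sum>\<sigma>\<in>?P. (wrd (replicate n x) :: ('g,'k) fralg))"
    by (intro sum.cong) auto
  also have "\<dots> = fsc (of_nat (fact n)) (wrd (replicate n x))"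
    by (simp only: sum_const_fsc card_permutations[of "{..<n}" n] card_lessThan finite_lessThan)
  finally show ?thesis unfolding symw_pw
    by (simp only: length_replicate fsc_fsc qinv_fact_mult1[OF assms] fsc_one)
qed

definition Wd :: "'g \<Rightarrow> 'g \<Rightarrow> nat \<Rightarrow> nat \<Rightarrow> 'g list" where
  "Wd x y k i = replicate i x @ y # replicate (k - i) x"

lemma symw_xky:
  assumes "contains_rat TYPE('k::comm_ring_1)"
  shows "symw (replicate k x @ [y]) = (\<Sum>i\<le>k. fsc (qinv (Suc k)) (wrd (Wd x y k i)) :: ('g,'k) fralg)"
proof -
  let ?w = "replicate k x @ [y]"
  let ?P = "{\<sigma>. \<sigma> permutes {..<Suc k}}"
  have wn: "?w ! j = (if j = k then y else x)" if "j < Suc k" for j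
    using that by (auto simp: nth_append)
  have Wn: "Wd x y k i ! j = (if j = i then y else x)" if "j < Suc k" "i \<le> k" for i j
    using that by (auto simp: Wd_def nth_append nth_Cons')
  have pweq: "pw ?w \<sigma> = Wd x y k (inv \<sigma> k)" if "\<sigma> \<in> ?P" for \<sigma>
  proof -
    have s: "\<sigma> permutes {..<Suc k}" using that by simp
    have ik: "inv \<sigma> k \<le> k" using permutes_in_image[OF permutes_inv[OF s], of k] by simp
    show ?thesis
    proof (rule nth_equalityI)
      show "length (pw ?w \<sigma>) = length (Wd x y k (inv \<sigma> k))" using ik by (simp add: Wd_def)
      fix j assume "j < length (pw ?w \<sigma>)"
      hence j: "j < Suc k" by simp
      have sj: "\<sigma> j < Suc k" using permutes_in_image[OF s] j by simp
      have "(\<sigma> j = k) = (j = inv \<sigma> k)" using permutes_inv_eq[OF s] by metis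
      thus "pw ?w \<sigma> ! j = Wd x y k (inv \<sigma> k) ! j" using j sj wn Wn[OF j ik] by simp
    qed
  qed
  have "(\<Sum>\<sigma>\<in>?P. (wrd (pw ?w \<sigma>) :: ('g,'k) fralg)) = (\<Sum>\<sigma>\<in>?P. wrd (Wd x y k (inv \<sigma> k)))"
    using pweq by (intro sum.cong) auto
  also have "\<dots> = (\<Sum>i\<in>{..k}. \<Sum>\<sigma>\<in>{\<sigma>. \<sigma> \<in> ?P \<and> inv \<sigma> k = i}. wrd (Wd x y k (inv \<sigma> k)))"
  proof (rule sum.group[symmetric])
    show "finite ?P" by (rule finite_permutations) simp
    show "(\<lambda>\<sigma>. inv \<sigma> k) ` ?P \<subseteq> {..k}"
    proof (rule subsetI)
      fix j assume "j \<in> (\<lambda>\<sigma>. inv \<sigma> k) ` ?P"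
      then obtain \<sigma> where s: "\<sigma> permutes {..<Suc k}" and j: "j = inv \<sigma> k" by auto
      have "inv \<sigma> k < Suc k" using permutes_in_image[OF permutes_inv[OF s], of k] by simp
      thus "j \<in> {..k}" using j by simp
    qed
  qed simp
  also have "\<dots> = (\<Sum>i\<in>{..k}. fsc (of_nat (fact k)) (wrd (Wd x y k i)))"
  proof (rule sum.cong[OF refl])
    fix i assume "i \<in> {..k}"
    hence ik: "i \<le> k" by simp
    have se: "{\<sigma>. \<sigma> \<in> ?P \<and> inv \<sigma> k = i} = {\<sigma>. \<sigma> permutes {..<Suc k} \<and> \<sigma> i = k}"
    proof (rule Collect_cong)
      fix \<sigma> :: "nat \<Rightarrow> nat"
      show "(\<sigma> \<in> ?P \<and> inv \<sigma> k = i) = (\<sigma> permutes {..<Suc k} \<and> \<sigma> i = k)"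
        using permutes_inv_eq[of \<sigma> "{..<Suc k}" k i] by auto
    qed
    have "(\<Sum>\<sigma>\<in>{\<sigma>. \<sigma> \<in> ?P \<and> inv \<sigma> k = i}. (wrd (Wd x y k (inv \<sigma> k)) :: ('g,'k) fralg))
        = (\<Sum>\<sigma>\<in>{\<sigma>. \<sigma> \<in> ?P \<and> inv \<sigma> k = i}. wrd (Wd x y k i))"
      by (rule sum.cong) auto
    also have "\<dots> = fsc (of_nat (fact k)) (wrd (Wd x y k i))"
      by (simp only: sum_const_fsc se card_fix[OF ik])
    finally show "(\<Sum>\<sigma>\<in>{\<sigma>. \<sigma> \<in> ?P \<and> inv \<sigma> k = i}. (wrd (Wd x y k (inv \<sigma> k)) :: ('g,'k) fralg))
        = fsc (of_nat (fact k)) (wrd (Wd x y k i))" .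
  qed
  finally have e: "(\<Sum>\<sigma>\<in>?P. (wrd (pw ?w \<sigma>) :: ('g,'k) fralg)) = (\<Sum>i\<in>{..k}. fsc (of_nat (fact k)) (wrd (Wd x y k i)))" .
  have l: "length ?w = Suc k" by simp
  show ?thesis unfolding symw_pw l e
    by (simp only: fsc_sum_right fsc_fsc qinv_fact_mult[OF assms])
qed


lemma sum_atMost_rev: "(\<Sum>k\<le>(n::nat). f k) = (\<Sum>a\<le>n. f (n - a))"
  by (rule sum.reindex_bij_witness[where i="\<lambda>a. n - a" and j="\<lambda>a. n - a"]) auto

lemma Q_coeff:
  assumes "m \<le> n"
  shows "(\<Sum>a\<le>m. of_nat (n choose (n - a)) * bernoulli_num a * (1 / of_nat (Suc (n - a)))
      * of_nat (Suc (n - a) choose Suc (m - a))) = (if m = 0 then 1 else (0::rat))"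
proof -
  have "(\<Sum>a\<le>m. of_nat (n choose (n - a)) * bernoulli_num a * (1 / of_nat (Suc (n - a)))
      * of_nat (Suc (n - a) choose Suc (m - a)))
      = (\<Sum>a\<le>m. of_nat (n choose m) * (of_nat (m choose a) * bernoulli_num a / of_nat (m - a + 1)))"
  proof (rule sum.cong[OF refl])
    fix a assume "a \<in> {..m}"
    hence am: "a \<le> m" by simp
    have an: "a \<le> n" using am assms by simp
    have s1: "n choose (n - a) = n choose a" using binomial_symmetric[OF an] by simp
    have s2: "Suc (n - a) * ((n - a) choose (m - a)) = (Suc (n - a) choose Suc (m - a)) * Suc (m - a)"
      by (rule Suc_times_binomial_eq)
    have s3: "(n choose m) * (m choose a) = (n choose a) * ((n - a) choose (m - a))"
      by (rule choose_mult[OF am assms])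
    have s2': "(of_nat (Suc (n - a) choose Suc (m - a)) :: rat) / of_nat (Suc (n - a))
        = of_nat ((n - a) choose (m - a)) / of_nat (Suc (m - a))"
    proof -
      have "(of_nat (Suc (n - a)) :: rat) * of_nat ((n - a) choose (m - a)) = of_nat (Suc (n - a) choose Suc (m - a)) * of_nat (Suc (m - a))"
        using arg_cong[OF s2, of "of_nat :: nat \<Rightarrow> rat"] by (simp only: of_nat_mult)
      thus ?thesis by (simp add: field_simps del: of_nat_Suc)
    qed
    have s3': "(of_nat (n choose m) :: rat) * of_nat (m choose a) = of_nat (n choose a) * of_nat ((n - a) choose (m - a))"
      using arg_cong[OF s3, of "of_nat :: nat \<Rightarrow> rat"] by (simp only: of_nat_mult)
    have "of_nat (n choose (n - a)) * bernoulli_num a * (1 / of_nat (Suc (n - a))) * of_nat (Suc (n - a) choose Suc (m - a))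
        = of_nat (n choose a) * bernoulli_num a * ((of_nat (Suc (n - a) choose Suc (m - a)) :: rat) / of_nat (Suc (n - a)))"
      by (simp add: s1)
    also have "\<dots> = of_nat (n choose a) * of_nat ((n - a) choose (m - a)) * bernoulli_num a / of_nat (Suc (m - a))"
      unfolding s2' by simp
    also have "\<dots> = of_nat (n choose m) * of_nat (m choose a) * bernoulli_num a / of_nat (Suc (m - a))"
      unfolding s3' ..
    also have "\<dots> = of_nat (n choose m) * (of_nat (m choose a) * bernoulli_num a / of_nat (m - a + 1))"
      by simp
    finally show "of_nat (n choose (n - a)) * bernoulli_num a * (1 / of_nat (Suc (n - a))) * of_nat (Suc (n - a) choose Suc (m - a))
        = of_nat (n choose m) * (of_nat (m choose a) * bernoulli_num a / of_nat (m - a + 1))" .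
  qed
  also have "\<dots> = of_nat (n choose m) * (\<Sum>a\<le>m. of_nat (m choose a) * bernoulli_num a / of_nat (m - a + 1))"
    by (simp add: sum_distrib_left)
  also have "\<dots> = (if m = 0 then 1 else 0)" by (simp only: bern_sum) simp
  finally show ?thesis .
qed

lemma pascal_sum:
  fixes t :: "nat \<Rightarrow> 'k::comm_ring_1"
  shows "(\<Sum>l\<le>i. of_nat (i choose l) * t l) + (\<Sum>l\<le>i. of_nat (i choose l) * t (Suc l))
       = (\<Sum>l\<le>Suc i. of_nat (Suc i choose l) * t l)"
proof -
  have a: "(\<Sum>l\<le>i. of_nat (i choose l) * t l) = t 0 + (\<Sum>l\<le>i. of_nat (i choose Suc l) * t (Suc l))"
  proof -
    have "(\<Sum>l\<le>Suc i. of_nat (i choose l) * t l) = (\<Sum>l\<le>i. of_nat (i choose l) * t l)"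
      by (simp add: sum.atMost_Suc binomial_eq_0)
    moreover have "(\<Sum>l\<le>Suc i. of_nat (i choose l) * t l) = t 0 + (\<Sum>l\<le>i. of_nat (i choose Suc l) * t (Suc l))"
      by (subst sum.atMost_Suc_shift) simp
    ultimately show ?thesis by simp
  qed
  have "(\<Sum>l\<le>Suc i. of_nat (Suc i choose l) * t l) = t 0 + (\<Sum>l\<le>i. of_nat (Suc i choose Suc l) * t (Suc l))"
    by (subst sum.atMost_Suc_shift) simp
  also have "\<dots> = t 0 + (\<Sum>l\<le>i. of_nat (i choose Suc l) * t (Suc l)) + (\<Sum>l\<le>i. of_nat (i choose l) * t (Suc l))"
    by (simp add: sum.distrib algebra_simps)
  finally show ?thesis using a by simp
qed

lemma hockey_sum:
  fixes v :: "nat \<Rightarrow> 'k::comm_ring_1"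
  shows "(\<Sum>i\<le>k. \<Sum>l\<le>i. of_nat (i choose l) * v l) = (\<Sum>l\<le>k. of_nat (Suc k choose Suc l) * v l)"
proof -
  have "(\<Sum>i\<le>k. \<Sum>l\<le>i. of_nat (i choose l) * v l) = (\<Sum>i\<le>k. \<Sum>l\<le>k. of_nat (i choose l) * v l)"
  proof (rule sum.cong[OF refl])
    fix i assume ik: "i \<in> {..k}"
    show "(\<Sum>l\<le>i. of_nat (i choose l) * v l) = (\<Sum>l\<le>k. of_nat (i choose l) * v l)"
    proof (rule sum.mono_neutral_left)
      show "finite {..k}" by simp
      show "{..i} \<subseteq> {..k}" using ik by auto
      show "\<forall>l\<in>{..k} - {..i}. of_nat (i choose l) * v l = 0"
      proof
        fix l assume "l \<in> {..k} - {..i}"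
        hence "i < l" by auto
        thus "of_nat (i choose l) * v l = 0" by (simp add: binomial_eq_0)
      qed
    qed
  qed
  also have "\<dots> = (\<Sum>l\<le>k. \<Sum>i\<le>k. of_nat (i choose l) * v l)" by (rule sum.swap)
  also have "\<dots> = (\<Sum>l\<le>k. of_nat (\<Sum>i\<le>k. i choose l) * v l)"
    by (simp add: sum_distrib_right)
  also have "\<dots> = (\<Sum>l\<le>k. of_nat (Suc k choose Suc l) * v l)" by (simp only: sum_choose_upper)
  finally show ?thesis .
qed

lemma triangle_sum:
  fixes g :: "nat \<Rightarrow> nat \<Rightarrow> 'k::comm_ring_1"
  shows "(\<Sum>a\<le>n. \<Sum>l\<le>n - a. g a l) = (\<Sum>m\<le>n. \<Sum>a\<le>m. g a (m - a))"
proof -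
  have "(\<Sum>a\<le>n. \<Sum>l\<le>n - a. g a l) = (\<Sum>(a, l)\<in>Sigma {..n} (\<lambda>a. {..n - a}). g a l)"
    by (rule sum.Sigma) auto
  also have "Sigma {..n} (\<lambda>a. {..n - a}) = {(a, l). a + l \<le> n}" by auto
  also have "(\<Sum>(a, l)\<in>{(a, l). a + l \<le> n}. g a l) = (\<Sum>m\<le>n. \<Sum>a\<le>m. g a (m - a))"
    by (rule sum.triangle_reindex_eq)
  finally show ?thesis .
qed

lemma final_scalar:
  fixes v :: "nat \<Rightarrow> 'k::comm_ring_1"
  assumes cr: "contains_rat TYPE('k)"
  shows "(\<Sum>k\<le>n. (of_nat (n choose k) * ratk (bernoulli_num (n - k))) *
            (\<Sum>l\<le>k. (qinv (Suc k) * of_nat (Suc k choose Suc l)) * v (n - k + l))) = v 0"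
proof -
  define d :: "nat \<Rightarrow> nat \<Rightarrow> 'k" where "d k l = (of_nat (n choose k) * ratk (bernoulli_num (n - k))) * (qinv (Suc k) * of_nat (Suc k choose Suc l))" for k l
  have "(\<Sum>k\<le>n. (of_nat (n choose k) * ratk (bernoulli_num (n - k))) *
            (\<Sum>l\<le>k. (qinv (Suc k) * of_nat (Suc k choose Suc l)) * v (n - k + l)))
      = (\<Sum>k\<le>n. \<Sum>l\<le>k. d k l * v (n - k + l))"
    by (simp add: d_def sum_distrib_left mult.assoc)
  also have "\<dots> = (\<Sum>a\<le>n. \<Sum>l\<le>n - a. d (n - a) l * v (n - (n - a) + l))"
    by (rule sum_atMost_rev)
  also have "\<dots> = (\<Sum>a\<le>n. \<Sum>l\<le>n - a. d (n - a) l * v (a + l))"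
    by (intro sum.cong) auto
  also have "\<dots> = (\<Sum>m\<le>n. \<Sum>a\<le>m. d (n - a) (m - a) * v (a + (m - a)))"
    by (rule triangle_sum)
  also have "\<dots> = (\<Sum>m\<le>n. (\<Sum>a\<le>m. d (n - a) (m - a)) * v m)"
    by (intro sum.cong) (auto simp: sum_distrib_right)
  also have "\<dots> = (\<Sum>m\<le>n. (if m = 0 then 1 else 0) * v m)"
  proof (rule sum.cong[OF refl])
    fix m assume "m \<in> {..n}"
    hence mn: "m \<le> n" by simp
    have "(\<Sum>a\<le>m. d (n - a) (m - a)) = (\<Sum>a\<le>m. ratk (of_nat (n choose (n - a)) * bernoulli_num a * (1 / of_nat (Suc (n - a)))
      * of_nat (Suc (n - a) choose Suc (m - a))))"
    proof (rule sum.cong[OF refl])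
      fix a assume "a \<in> {..m}"
      hence eq: "n - (n - a) = a" using mn by simp
      show "d (n - a) (m - a) = ratk (of_nat (n choose (n - a)) * bernoulli_num a * (1 / of_nat (Suc (n - a)))
      * of_nat (Suc (n - a) choose Suc (m - a)))"
        unfolding d_def eq ratk_mult[OF cr] ratk_of_nat[OF cr] ratk_qinv[OF cr zero_less_Suc] by (simp only: ac_simps)
    qed
    also have "\<dots> = ratk (if m = 0 then 1 else 0)"
      by (simp only: ratk_sum[OF cr, symmetric] Q_coeff[OF mn])
    also have "\<dots> = (if m = 0 then 1 else 0)"
      using ratk_of_nat[OF cr, of 1] ratk_of_nat[OF cr, of 0] by simp
    finally show "(\<Sum>a\<le>m. d (n - a) (m - a)) * v m = (if m = 0 then 1 else 0) * v m" by simp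
  qed
  also have "\<dots> = (\<Sum>m\<le>n. if m = 0 then v m else 0)" by (rule sum.cong) auto
  also have "\<dots> = v 0" by (simp add: sum.delta)
  finally show ?thesis .
qed


lemma relU_comm: "wrd [a, b] - wrd [b, a] - wrd [br a b] \<in> idl (rel_U scale br)"
  by (rule idl.gen) (auto simp: rel_U_def)

lemma reorder:
  fixes scale :: "'k::comm_ring_1 \<Rightarrow> 'g::ab_group_add \<Rightarrow> 'g"
  shows "wrd (replicate i x @ (br x ^^ j) h # v) -
    (\<Sum>l\<le>i. fsc (of_nat (i choose l)) (wrd ((br x ^^ (j + l)) h # replicate (i - l) x @ v)))
    \<in> idl (rel_U scale br)"
proof (induction i arbitrary: j v)
  case 0
  have "(wrd ((br x ^^ j) h # v) :: ('g,'k) fralg) -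
    (\<Sum>l\<le>0. fsc (of_nat (0 choose l)) (wrd ((br x ^^ (j + l)) h # replicate (0 - l) x @ v))) = 0"
    by simp
  thus ?case by (simp only: replicate_0 append_Nil idl.zero)
next
  case (Suc i)
  let ?Y = "\<lambda>j. (br x ^^ j) h"
  let ?I = "idl (rel_U scale br)"
  define A :: "('g,'k) fralg" where "A = wrd (replicate i x @ [x, ?Y j] @ v)"
  define B :: "('g,'k) fralg" where "B = wrd (replicate i x @ ?Y j # x # v)"
  define C :: "('g,'k) fralg" where "C = wrd (replicate i x @ ?Y (Suc j) # v)"
  define S1 :: "('g,'k) fralg" where "S1 = (\<Sum>l\<le>i. fsc (of_nat (i choose l)) (wrd (?Y (j + l) # replicate (i - l) x @ x # v)))"
  define S2 :: "('g,'k) fralg" where "S2 = (\<Sum>l\<le>i. fsc (of_nat (i choose l)) (wrd (?Y (Suc j + l) # replicate (i - l) x @ v)))"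
  define T :: "('g,'k) fralg" where "T = (\<Sum>l\<le>Suc i. fsc (of_nat (Suc i choose l)) (wrd (?Y (j + l) # replicate (Suc i - l) x @ v)))"
  have r: "A - B - C \<in> ?I"
  proof -
    have "sand (replicate i x) (wrd [x, ?Y j] - wrd [?Y j, x] - wrd [br x (?Y j)]) v \<in> ?I"
      by (intro sand_idl relU_comm)
    moreover have "sand (replicate i x) (wrd [x, ?Y j] - wrd [?Y j, x] - wrd [br x (?Y j)]) v = A - B - C"
      unfolding A_def B_def C_def by (simp add: sand_diff sand_wrd)
    ultimately show ?thesis by simp
  qed
  have i1: "B - S1 \<in> ?I" unfolding B_def S1_def using Suc.IH[of j "x # v"] .
  have i2: "C - S2 \<in> ?I" unfolding C_def S2_def using Suc.IH[of "Suc j" v] .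
  have lhs: "wrd (replicate (Suc i) x @ ?Y j # v) = A"
    unfolding A_def by (simp add: replicate_append_same[symmetric])
  have ST: "S1 + S2 = T"
  proof (rule ext)
    fix w
    define t where "t l = (wrd (?Y (j + l) # replicate (Suc i - l) x @ v) :: ('g,'k) fralg) w" for l
    have "S1 w = (\<Sum>l\<le>i. of_nat (i choose l) * t l)"
      unfolding S1_def sum_fun_apply
    proof (rule sum.cong[OF refl])
      fix l assume "l \<in> {..i}"
      hence rl: "replicate (i - l) x @ x # v = replicate (Suc i - l) x @ v"
        by (simp add: replicate_append_same[symmetric] Suc_diff_le)
      show "fsc (of_nat (i choose l)) (wrd (?Y (j + l) # replicate (i - l) x @ x # v)) w = of_nat (i choose l) * t l"
        unfolding t_def fsc_def rl by (rule refl)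
    qed
    moreover have "S2 w = (\<Sum>l\<le>i. of_nat (i choose l) * t (Suc l))"
      unfolding S2_def sum_fun_apply t_def fsc_def by (intro sum.cong) auto
    moreover have "T w = (\<Sum>l\<le>Suc i. of_nat (Suc i choose l) * t l)"
      unfolding T_def sum_fun_apply t_def fsc_def by simp
    ultimately show "(S1 + S2) w = T w" using pascal_sum[of i t] by simp
  qed
  have "(A - B - C) + (B - S1) + (C - S2) \<in> ?I" using r i1 i2 by (intro idl.add)
  moreover have "(A - B - C) + (B - S1) + (C - S2) = A - (S1 + S2)" by (simp add: algebra_simps)
  ultimately have "A - T \<in> ?I" using ST by simp
  hence "wrd (replicate (Suc i) x @ ?Y j # v) - T \<in> ?I" by (simp only: lhs)
  thus ?case unfolding T_def .
qed


lemma symw_reorder: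
  fixes scale :: "'k::comm_ring_1 \<Rightarrow> 'g::ab_group_add \<Rightarrow> 'g"
  assumes cr: "contains_rat TYPE('k)"
  shows "symw (replicate k x @ [(br x ^^ j) h]) -
    (\<Sum>l\<le>k. fsc (qinv (Suc k) * of_nat (Suc k choose Suc l)) (wrd ((br x ^^ (j + l)) h # replicate (k - l) x)))
    \<in> idl (rel_U scale br)"
proof -
  let ?Y = "\<lambda>j. (br x ^^ j) h"
  let ?I = "idl (rel_U scale br)"
  define q :: 'k where "q = qinv (Suc k)"
  define A :: "nat \<Rightarrow> ('g,'k) fralg" where
    "A i = (\<Sum>l\<le>i. fsc (of_nat (i choose l)) (wrd (?Y (j + l) # replicate (i - l) x @ replicate (k - i) x)))" for i
  have s: "symw (replicate k x @ [?Y j]) = (\<Sum>i\<le>k. fsc q (wrd (Wd x (?Y j) k i)) :: ('g,'k) fralg)"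
    unfolding q_def by (rule symw_xky[OF cr])
  have d: "(\<Sum>i\<le>k. fsc q (wrd (Wd x (?Y j) k i))) - (\<Sum>i\<le>k. fsc q (A i)) \<in> ?I"
  proof -
    have "(\<Sum>i\<le>k. fsc q (wrd (Wd x (?Y j) k i))) - (\<Sum>i\<le>k. fsc q (A i))
        = (\<Sum>i\<le>k. fsc q (wrd (Wd x (?Y j) k i) - A i))"
      by (simp only: fsc_diff_right sum_subtractf)
    moreover have "(\<Sum>i\<le>k. fsc q (wrd (Wd x (?Y j) k i) - A i)) \<in> ?I"
    proof (rule idl_sum)
      fix i
      have "wrd (Wd x (?Y j) k i) - A i \<in> ?I"
        unfolding Wd_def A_def by (rule reorder)
      thus "fsc q (wrd (Wd x (?Y j) k i) - A i) \<in> ?I" by (rule idl.smul)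
    qed
    ultimately show ?thesis by simp
  qed
  have e: "(\<Sum>i\<le>k. fsc q (A i)) =
    (\<Sum>l\<le>k. fsc (qinv (Suc k) * of_nat (Suc k choose Suc l)) (wrd (?Y (j + l) # replicate (k - l) x)))"
  proof (rule ext)
    fix w
    define v where "v l = (wrd (?Y (j + l) # replicate (k - l) x) :: ('g,'k) fralg) w" for l
    have "(\<Sum>i\<le>k. fsc q (A i)) w = (\<Sum>i\<le>k. q * (\<Sum>l\<le>i. of_nat (i choose l) * v l))"
      unfolding sum_fun_apply
    proof (rule sum.cong[OF refl])
      fix i assume "i \<in> {..k}"
      hence ik: "i \<le> k" by simp
      have "A i w = (\<Sum>l\<le>i. of_nat (i choose l) * v l)"
        unfolding A_def sum_fun_apply
      proof (rule sum.cong[OF refl])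
        fix l assume "l \<in> {..i}"
        hence "replicate (i - l) x @ replicate (k - i) x = replicate (k - l) x"
          using ik by (simp add: replicate_add[symmetric])
        thus "fsc (of_nat (i choose l)) (wrd (?Y (j + l) # replicate (i - l) x @ replicate (k - i) x)) w
            = of_nat (i choose l) * v l"
          unfolding v_def fsc_def by simp
      qed
      thus "fsc q (A i) w = q * (\<Sum>l\<le>i. of_nat (i choose l) * v l)" unfolding fsc_def by simp
    qed
    also have "\<dots> = q * (\<Sum>l\<le>k. of_nat (Suc k choose Suc l) * v l)"
      by (simp only: sum_distrib_left[symmetric] hockey_sum)
    also have "\<dots> = (\<Sum>l\<le>k. fsc (qinv (Suc k) * of_nat (Suc k choose Suc l)) (wrd (?Y (j + l) # replicate (k - l) x))) w"
      unfolding sum_fun_apply fsc_def v_def q_def by (simp add: sum_distrib_left mult.assoc)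
    finally show "(\<Sum>i\<le>k. fsc q (A i)) w = (\<Sum>l\<le>k. fsc (qinv (Suc k) * of_nat (Suc k choose Suc l)) (wrd (?Y (j + l) # replicate (k - l) x))) w" .
  qed
  show ?thesis using d unfolding s e .
qed


lemma final_U:
  fixes scale :: "'k::comm_ring_1 \<Rightarrow> 'g::ab_group_add \<Rightarrow> 'g"
  assumes cr: "contains_rat TYPE('k)"
  shows "symz (\<Sum>k\<le>n. fsc (of_nat (n choose k) * ratk (bernoulli_num (n - k)))
                                   (wrd (replicate k x @ [(br x ^^ (n - k)) h])))
      - wrd (h # replicate n x) \<in> idl (rel_U scale br)"
proof -
  let ?Y = "\<lambda>j. (br x ^^ j) h"
  let ?I = "idl (rel_U scale br)"
  define c :: "nat \<Rightarrow> 'k" where "c k = of_nat (n choose k) * ratk (bernoulli_num (n - k))" for k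
  define B :: "nat \<Rightarrow> ('g,'k) fralg" where
    "B k = (\<Sum>l\<le>k. fsc (qinv (Suc k) * of_nat (Suc k choose Suc l)) (wrd (?Y (n - k + l) # replicate (k - l) x)))" for k
  have sz: "symz (\<Sum>k\<le>n. fsc (c k) (wrd (replicate k x @ [?Y (n - k)])))
      = (\<Sum>k\<le>n. fsc (c k) (symw (replicate k x @ [?Y (n - k)])) :: ('g,'k) fralg)"
    by (simp only: symz_sum fsupp_fsc fsupp_wrd symz_fsc symz_wrd)
  have d: "(\<Sum>k\<le>n. fsc (c k) (symw (replicate k x @ [?Y (n - k)]))) - (\<Sum>k\<le>n. fsc (c k) (B k)) \<in> ?I"
  proof -
    have "(\<Sum>k\<le>n. fsc (c k) (symw (replicate k x @ [?Y (n - k)]))) - (\<Sum>k\<le>n. fsc (c k) (B k))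
        = (\<Sum>k\<le>n. fsc (c k) (symw (replicate k x @ [?Y (n - k)]) - B k))"
      by (simp only: fsc_diff_right sum_subtractf)
    moreover have "(\<Sum>k\<le>n. fsc (c k) (symw (replicate k x @ [?Y (n - k)]) - B k)) \<in> ?I"
    proof (rule idl_sum)
      fix k
      have "symw (replicate k x @ [?Y (n - k)]) - B k \<in> ?I"
        unfolding B_def by (rule symw_reorder[OF cr])
      thus "fsc (c k) (symw (replicate k x @ [?Y (n - k)]) - B k) \<in> ?I" by (rule idl.smul)
    qed
    ultimately show ?thesis by simp
  qed
  have e: "(\<Sum>k\<le>n. fsc (c k) (B k)) = wrd (h # replicate n x)"
  proof (rule ext)
    fix w
    define v where "v m = (wrd (?Y m # replicate (n - m) x) :: ('g,'k) fralg) w" for m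
    have "(\<Sum>k\<le>n. fsc (c k) (B k)) w = (\<Sum>k\<le>n. c k * (\<Sum>l\<le>k. (qinv (Suc k) * of_nat (Suc k choose Suc l)) * v (n - k + l)))"
      unfolding sum_fun_apply
    proof (rule sum.cong[OF refl])
      fix k assume "k \<in> {..n}"
      hence kn: "k \<le> n" by simp
      have "B k w = (\<Sum>l\<le>k. (qinv (Suc k) * of_nat (Suc k choose Suc l)) * v (n - k + l))"
        unfolding B_def sum_fun_apply
      proof (rule sum.cong[OF refl])
        fix l assume "l \<in> {..k}"
        hence "n - (n - k + l) = k - l" using kn by simp
        thus "fsc (qinv (Suc k) * of_nat (Suc k choose Suc l)) (wrd (?Y (n - k + l) # replicate (k - l) x)) w
          = (qinv (Suc k) * of_nat (Suc k choose Suc l)) * v (n - k + l)"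
          unfolding v_def fsc_def by simp
      qed
      thus "fsc (c k) (B k) w = c k * (\<Sum>l\<le>k. (qinv (Suc k) * of_nat (Suc k choose Suc l)) * v (n - k + l))"
        unfolding fsc_def by simp
    qed
    also have "\<dots> = v 0" unfolding c_def by (rule final_scalar[OF cr])
    also have "\<dots> = wrd (h # replicate n x) w" unfolding v_def by simp
    finally show "(\<Sum>k\<le>n. fsc (c k) (B k)) w = wrd (h # replicate n x) w" .
  qed
  have "symz (\<Sum>k\<le>n. fsc (c k) (wrd (replicate k x @ [?Y (n - k)]))) - wrd (h # replicate n x) \<in> ?I"
    using d unfolding sz[symmetric] e .
  thus ?thesis unfolding c_def .
qed

lemma xi_Scl:
  fixes scale :: "'k::comm_ring_1 \<Rightarrow> 'g::ab_group_add \<Rightarrow> 'g"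
  assumes "fsupp p0"
  shows "xi scale br (Scl scale p0) = Ucl scale br (symz p0)"
proof -
  define p where "p = (SOME p. p \<in> Scl scale p0)"
  have "p0 \<in> Scl scale p0" unfolding Scl_def by (rule qclass_mem[OF assms])
  hence "p \<in> Scl scale p0" unfolding p_def by (rule someI[where P="\<lambda>p. p \<in> Scl scale p0"])
  hence fp: "fsupp p" and pd: "p - p0 \<in> idl (rel_S scale)" unfolding Scl_def qclass_def by auto
  have "symz (p - p0) \<in> idl (rel_U scale br)" by (rule symz_idlS[OF pd])
  hence "symz p - symz p0 \<in> idl (rel_U scale br)" by (simp only: symz_diff[OF fp assms])
  hence "Ucl scale br (symz p) = Ucl scale br (symz p0)" unfolding Ucl_def by (rule qclass_eq)
  thus ?thesis unfolding xi_def p_def .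
qed

lemma Lmul_Ucl:
  fixes scale :: "'k::comm_ring_1 \<Rightarrow> 'g::ab_group_add \<Rightarrow> 'g"
  assumes "fsupp q0"
  shows "Lmul scale br h (Ucl scale br q0) = Ucl scale br (fmul (wrd [h]) q0)"
proof -
  define p where "p = (SOME p. p \<in> Ucl scale br q0)"
  have "q0 \<in> Ucl scale br q0" unfolding Ucl_def by (rule qclass_mem[OF assms])
  hence "p \<in> Ucl scale br q0" unfolding p_def by (rule someI[where P="\<lambda>p. p \<in> Ucl scale br q0"])
  hence pd: "p - q0 \<in> idl (rel_U scale br)" unfolding Ucl_def qclass_def by auto
  hence "fmul (wrd [h]) (p - q0) \<in> idl (rel_U scale br)" by (rule idl.lmul)
  hence "fmul (wrd [h]) p - fmul (wrd [h]) q0 \<in> idl (rel_U scale br)" by (simp only: fmul_diff_right)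
  hence "Ucl scale br (fmul (wrd [h]) p) = Ucl scale br (fmul (wrd [h]) q0)" unfolding Ucl_def by (rule qclass_eq)
  thus ?thesis unfolding Lmul_def p_def .
qed

theorem mainTheorem12:
  fixes scale :: "'k::comm_ring_1 \<Rightarrow> 'g::ab_group_add \<Rightarrow> 'g"
    and br :: "'g \<Rightarrow> 'g \<Rightarrow> 'g"
    and h x :: 'g and n :: nat
  assumes "contains_rat TYPE('k)"
    and "lie_algebra scale br"
    and PBW: "bij_betw (xi scale br) (Scarrier scale) (Ucarrier scale br)"
  shows "Dop scale br h (Scl scale (wrd (replicate n x)))
           = xi_inv scale br (Ucl scale br (wrd (h # replicate n x)))
       \<and> xi_inv scale br (Ucl scale br (wrd (h # replicate n x)))
           = Scl scale (\<Sum>k\<le>n. fsc (of_nat (n choose k) * ratk (bernoulli_num (n - k)))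
                                   (wrd (replicate k x @ [(br x ^^ (n - k)) h])))"
proof
  note cr = assms(1)
  have "xi scale br (Scl scale (wrd (replicate n x))) = Ucl scale br (symz (wrd (replicate n x)))"
    by (rule xi_Scl) simp
  also have "symz (wrd (replicate n x)) = (wrd (replicate n x) :: ('g,'k) fralg)"
    by (simp only: symz_wrd symw_rep[OF cr])
  finally have x1: "xi scale br (Scl scale (wrd (replicate n x))) = Ucl scale br (wrd (replicate n x))" .
  have l1: "Lmul scale br h (Ucl scale br (wrd (replicate n x))) = Ucl scale br (wrd (h # replicate n x))"
    by (simp add: Lmul_Ucl fmul_wrd_wrd)
  show "Dop scale br h (Scl scale (wrd (replicate n x))) = xi_inv scale br (Ucl scale br (wrd (h # replicate n x)))"
    unfolding Dop_def by (simp only: o_apply x1 l1)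
next
  note cr = assms(1)
  define R :: "('g,'k) fralg" where "R = (\<Sum>k\<le>n. fsc (of_nat (n choose k) * ratk (bernoulli_num (n - k)))
                                   (wrd (replicate k x @ [(br x ^^ (n - k)) h])))"
  have fR: "fsupp R" unfolding R_def by (intro fsupp_sum fsupp_fsc fsupp_wrd)
  have "xi scale br (Scl scale R) = Ucl scale br (symz R)" by (rule xi_Scl[OF fR])
  also have "\<dots> = Ucl scale br (wrd (h # replicate n x))"
    unfolding Ucl_def R_def by (rule qclass_eq[OF final_U[OF cr]])
  finally have xR: "xi scale br (Scl scale R) = Ucl scale br (wrd (h # replicate n x))" .
  have inj: "inj_on (xi scale br) (Scarrier scale)" using PBW by (simp add: bij_betw_def)
  have mem: "Scl scale R \<in> Scarrier scale" unfolding Scl_def Scarrier_def qcarrier_def using fR by blast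
  have "xi_inv scale br (Ucl scale br (wrd (h # replicate n x))) = Scl scale R"
    unfolding xi_inv_def xR[symmetric] by (rule the_inv_into_f_f[OF inj mem])
  thus "xi_inv scale br (Ucl scale br (wrd (h # replicate n x)))
           = Scl scale (\<Sum>k\<le>n. fsc (of_nat (n choose k) * ratk (bernoulli_num (n - k)))
                                   (wrd (replicate k x @ [(br x ^^ (n - k)) h])))"
    unfolding R_def .
qed


end
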